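(* Let $\mathcal{H}_o=(V,\vec H,\bm{w})$ be a strongly connected weighted oriented hypergraph with $|V|\ge2$. For all distinct $u,v\in V$ and all $\alpha\in[0,1)$, $$\frac{\kappa_\alpha(u,v)}{1-\alpha}\le\frac{2\max_{h\in\vec H}w_h}{d(u,v)}.$$
   Context: A weighted oriented hypergraph $(V,\vec H,\bm w)$ has a finite vertex set $V$, a finite set $\vec H$ of hyperedges, each an ordered pair $h=(A_h,B_h)$ of nonempty subsets of $V$ with $A_h\cap B_h=\emptyset$, such that for every $h\in\vec H$ its reversal $h^-=(B_h,A_h)$ also belongs to $\vec H$, and positive weights with $w_h=w_{h^-}$. A directed path from $u$ to $v$ is a sequence of hyperedges $h_1,\dots,h_l$ with $u\in A_{h_1}$, $v\in B_{h_l}$, $B_{h_j}\cap A_{h_{j+1}}\ne\emptyset$; strongly connected means such a path exists for all distinct $u,v$. $d(u,v)=\inf_\gamma\sum_{h\in\gamma}w_h$ over directed paths from $u$ to $v$ ($u\ne v$), $d(u,u)=0$. $\Gamma(v)=\{z:\exists h\in\vec H\text{ with }v\in A_h,z\in B_h\}$. For $\alpha\in[0,1]$: $\mu^\alpha_{u^{in}}(u)=\alpha$, $\mu^\alpha_{u^{in}}(z)=(1-\alpha)\sum_{h':u\in B_{h'},z\in A_{h'}}\frac{1}{|A_{h'}|}\frac{w_{h'}}{\sum_{h'':u\in B_{h''}}w_{h''}}$ for $z\in\Gamma(u)$, $0$ otherwise; $\mu^\alpha_{v^{out}}(v)=\alpha$, $\mu^\alpha_{v^{out}}(z)=(1-\alpha)\sum_{h':v\in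 A_{h'},z\in B_{h'}}\frac{1}{|B_{h'}|}\frac{w_{h'}}{\sum_{h'':v\in A_{h''}}w_{h''}}$ for $z\in\Gamma(v)$, $0$ otherwise. $W(\mu,\nu)=\inf_\pi\sum_{x,y}\pi(x,y)d(x,y)$ over couplings $\pi$ of $\mu,\nu$. For distinct $u,v$: $\kappa_\alpha(u,v)=1-W(\mu^\alpha_{u^{in}},\mu^\alpha_{v^{out}})/d(u,v)$. *)

theory Defs
  imports Complex_Main
begin

text \<open>A hyperedge is a pair (A_h, B_h) of vertex sets; the set of hyperedges is H,
  the weight function is w.\<close>

type_synonym 'a hedge = "'a set \<times> 'a set"

definition weighted_oriented_hypergraph ::
  "'a set \<Rightarrow> 'a hedge set \<Rightarrow> ('a hedge \<Rightarrow> real) \<Rightarrow> bool" where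
  "weighted_oriented_hypergraph V H w \<longleftrightarrow>
     finite V \<and> finite H \<and>
     (\<forall>h\<in>H. fst h \<noteq> {} \<and> snd h \<noteq> {} \<and> fst h \<subseteq> V \<and> snd h \<subseteq> V
            \<and> fst h \<inter> snd h = {}
            \<and> (snd h, fst h) \<in> H
            \<and> w h > 0 \<and> w (snd h, fst h) = w h)"

definition dpath :: "'a hedge set \<Rightarrow> 'a \<Rightarrow> 'a \<Rightarrow> 'a hedge list \<Rightarrow> bool" where
  "dpath H u v hs \<longleftrightarrow> hs \<noteq> [] \<and> set hs \<subseteq> H \<and>
     u \<in> fst (hd hs) \<and> v \<in> snd (last hs) \<and>
     (\<forall>j. Suc j < length hs \<longrightarrow> snd (hs ! j) \<inter> fst (hs ! Suc j) \<noteq> {})"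

definition strongly_connected :: "'a set \<Rightarrow> 'a hedge set \<Rightarrow> bool" where
  "strongly_connected V H \<longleftrightarrow>
     (\<forall>u\<in>V. \<forall>v\<in>V. u \<noteq> v \<longrightarrow> (\<exists>hs. dpath H u v hs))"

definition hdist :: "'a hedge set \<Rightarrow> ('a hedge \<Rightarrow> real) \<Rightarrow> 'a \<Rightarrow> 'a \<Rightarrow> real" where
  "hdist H w u v = (if u = v then 0
     else Inf {sum_list (map w hs) | hs. dpath H u v hs})"

definition Gamma :: "'a hedge set \<Rightarrow> 'a \<Rightarrow> 'a set" where
  "Gamma H v = {z. \<exists>h\<in>H. v \<in> fst h \<and> z \<in> snd h}"

definition mu_in :: "'a hedge set \<Rightarrow> ('a hedge \<Rightarrow> real) \<Rightarrow> real \<Rightarrow> 'a \<Rightarrow> 'a \<Rightarrow> real" where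
  "mu_in H w \<alpha> u z =
    (if z = u then \<alpha>
     else if z \<in> Gamma H u then
       (1 - \<alpha>) * (\<Sum>h'\<in>{h'\<in>H. u \<in> snd h' \<and> z \<in> fst h'}.
          (1 / real (card (fst h'))) * (w h' / (\<Sum>h''\<in>{h''\<in>H. u \<in> snd h''}. w h'')))
     else 0)"

definition mu_out :: "'a hedge set \<Rightarrow> ('a hedge \<Rightarrow> real) \<Rightarrow> real \<Rightarrow> 'a \<Rightarrow> 'a \<Rightarrow> real" where
  "mu_out H w \<alpha> v z =
    (if z = v then \<alpha>
     else if z \<in> Gamma H v then
       (1 - \<alpha>) * (\<Sum>h'\<in>{h'\<in>H. v \<in> fst h' \<and> z \<in> snd h'}.
          (1 / real (card (snd h'))) * (w h' / (\<Sum>h''\<in>{h''\<in>H. v \<in> fst h''}. w h'')))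
     else 0)"

definition couplings :: "'a set \<Rightarrow> ('a \<Rightarrow> real) \<Rightarrow> ('a \<Rightarrow> real) \<Rightarrow> ('a \<Rightarrow> 'a \<Rightarrow> real) set" where
  "couplings V \<mu> \<nu> = {\<pi>. (\<forall>x y. \<pi> x y \<ge> 0) \<and>
       (\<forall>x y. (x \<notin> V \<or> y \<notin> V) \<longrightarrow> \<pi> x y = 0) \<and>
       (\<forall>x\<in>V. (\<Sum>y\<in>V. \<pi> x y) = \<mu> x) \<and>
       (\<forall>y\<in>V. (\<Sum>x\<in>V. \<pi> x y) = \<nu> y)}"

definition wasserstein :: "'a set \<Rightarrow> ('a \<Rightarrow> 'a \<Rightarrow> real) \<Rightarrow> ('a \<Rightarrow> real) \<Rightarrow> ('a \<Rightarrow> real) \<Rightarrow> real" where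
  "wasserstein V d \<mu> \<nu> =
     Inf ((\<lambda>\<pi>. \<Sum>x\<in>V. \<Sum>y\<in>V. \<pi> x y * d x y) ` couplings V \<mu> \<nu>)"

definition kappa :: "'a set \<Rightarrow> 'a hedge set \<Rightarrow> ('a hedge \<Rightarrow> real) \<Rightarrow> real \<Rightarrow> 'a \<Rightarrow> 'a \<Rightarrow> real" where
  "kappa V H w \<alpha> u v =
     1 - wasserstein V (hdist H w) (mu_in H w \<alpha> u) (mu_out H w \<alpha> v) / hdist H w u v"

end

theory Submission
  imports Defs
begin

lemma woh_facts:
  assumes "weighted_oriented_hypergraph V H w"
  shows "finite V" "finite H"
    "\<And>h. h \<in> H \<Longrightarrow> fst h \<noteq> {} \<and> snd h \<noteq> {} \<and> fst h \<subseteq> V \<and> snd h \<subseteq> V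
            \<and> fst h \<inter> snd h = {} \<and> (snd h, fst h) \<in> H \<and> w h > 0 \<and> w (snd h, fst h) = w h"
  using assms unfolding weighted_oriented_hypergraph_def by auto

lemma woh_swap:
  assumes "weighted_oriented_hypergraph V H w" "(a, b) \<in> H"
  shows "(b, a) \<in> H" "w (b, a) = w (a, b)"
  using woh_facts(3)[OF assms(1) assms(2)] by auto

lemma dpath_single: "h \<in> H \<Longrightarrow> x \<in> fst h \<Longrightarrow> y \<in> snd h \<Longrightarrow> dpath H x y [h]"
  unfolding dpath_def by auto

lemma dpath_append:
  assumes "dpath H x y p" "dpath H y z q"
  shows "dpath H x z (p @ q)"
proof -
  have pq: "p \<noteq> []" "q \<noteq> []" "set p \<subseteq> H" "set q \<subseteq> H" "x \<in> fst (hd p)" "y \<in> snd (last p)"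
    "y \<in> fst (hd q)" "z \<in> snd (last q)"
    "\<And>j. Suc j < length p \<Longrightarrow> snd (p ! j) \<inter> fst (p ! Suc j) \<noteq> {}"
    "\<And>j. Suc j < length q \<Longrightarrow> snd (q ! j) \<inter> fst (q ! Suc j) \<noteq> {}"
    using assms unfolding dpath_def by auto
  have "snd ((p@q) ! j) \<inter> fst ((p@q) ! Suc j) \<noteq> {}" if j: "Suc j < length (p@q)" for j
  proof -
    consider "Suc j < length p" | "Suc j = length p" | "Suc j > length p" by linarith
    then show ?thesis
    proof cases
      case 1 then show ?thesis using pq(9)[OF 1] by (simp add: nth_append)
    next
      case 2
      have jj: "j = length p - 1" using 2 by simp
      have "(p@q) ! j = last p" using jj pq(1) by (simp add: nth_append last_conv_nth)
      moreover have "(p@q) ! Suc j = hd q" using 2 pq(2) by (simp add: nth_append hd_conv_nth)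
      ultimately show ?thesis using pq(6,7) by auto
    next
      case 3
      define k where "k = j - length p"
      have jk: "j = length p + k" using 3 k_def by simp
      have "Suc k < length q" using j jk by simp
      then show ?thesis using pq(10)[of k] jk by (simp add: nth_append)
    qed
  qed
  moreover have "hd (p@q) = hd p" "last (p@q) = last q" using pq(1,2) by auto
  ultimately show ?thesis using pq unfolding dpath_def by auto
qed

lemma path_sum_ge:
  assumes "weighted_oriented_hypergraph V H w" "dpath H x y hs"
  shows "sum_list (map w hs) \<ge> Min (w ` H)"
proof -
  obtain h t where hs: "hs = h # t" using assms(2) unfolding dpath_def by (cases hs) auto
  have hH: "h \<in> H" "set t \<subseteq> H" using assms(2) hs unfolding dpath_def by auto
  have "sum_list (map w t) \<ge> 0"
    using hH(2) woh_facts(3)[OF assms(1)] by (intro sum_list_nonneg) (auto simp: less_imp_le)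
  moreover have "Min (w ` H) \<le> w h" using hH woh_facts(2)[OF assms(1)] by auto
  ultimately show ?thesis using hs by simp
qed

lemma Min_pos:
  assumes "weighted_oriented_hypergraph V H w" "H \<noteq> {}"
  shows "Min (w ` H) > 0"
  using assms woh_facts[OF assms(1)] by (subst Min_gr_iff) auto

lemma hdist_props:
  assumes "weighted_oriented_hypergraph V H w" "strongly_connected V H"
    "x \<in> V" "y \<in> V" "x \<noteq> y"
  shows "\<And>hs. dpath H x y hs \<Longrightarrow> hdist H w x y \<le> sum_list (map w hs)"
    "hdist H w x y \<ge> Min (w ` H)"
proof -
  let ?S = "{sum_list (map w hs) | hs. dpath H x y hs}"
  obtain hs0 where hs0: "dpath H x y hs0" using assms(2-5) unfolding strongly_connected_def by auto
  have ne: "?S \<noteq> {}" using hs0 by auto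
  have bdd: "bdd_below ?S" using path_sum_ge[OF assms(1)] by (auto intro!: bdd_belowI[where m="Min (w ` H)"])
  show "hdist H w x y \<le> sum_list (map w hs)" if "dpath H x y hs" for hs
    unfolding hdist_def using assms(5) that by (auto intro!: cInf_lower[OF _ bdd])
  show "hdist H w x y \<ge> Min (w ` H)"
    unfolding hdist_def using assms(5) ne path_sum_ge[OF assms(1)] by (auto intro!: cInf_greatest)
qed

lemma H_ne:
  assumes "strongly_connected V H" "x \<in> V" "y \<in> V" "x \<noteq> y"
  shows "H \<noteq> {}"
  using assms unfolding strongly_connected_def dpath_def by (metis hd_in_set empty_iff subset_empty)

lemma hdist_nonneg:
  assumes "weighted_oriented_hypergraph V H w" "strongly_connected V H"
    "x \<in> V" "y \<in> V"
  shows "hdist H w x y \<ge> 0"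
proof (cases "x = y")
  case True then show ?thesis by (simp add: hdist_def)
next
  case False
  have "H \<noteq> {}" using H_ne[OF assms(2-4) False] .
  then show ?thesis using hdist_props(2)[OF assms False] Min_pos[OF assms(1)] by linarith
qed

lemma hdist_tri:
  assumes "weighted_oriented_hypergraph V H w" "strongly_connected V H"
    "x \<in> V" "y \<in> V" "z \<in> V"
  shows "hdist H w x z \<le> hdist H w x y + hdist H w y z"
proof -
  consider "x = z" | "x = y" | "y = z" | "x \<noteq> z" "x \<noteq> y" "y \<noteq> z" by blast
  then show ?thesis
  proof cases
    case 1 then show ?thesis using hdist_nonneg[OF assms(1,2)] assms(3-5) by (simp add: hdist_def add_nonneg_nonneg)
  next
    case 2 then show ?thesis by (simp add: hdist_def)
  next
    case 3 then show ?thesis by (simp add: hdist_def)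
  next
    case 4
    let ?S1 = "{sum_list (map w hs) | hs. dpath H x y hs}"
    let ?S2 = "{sum_list (map w hs) | hs. dpath H y z hs}"
    have ne1: "?S1 \<noteq> {}" using assms 4 unfolding strongly_connected_def by auto
    have ne2: "?S2 \<noteq> {}" using assms 4 unfolding strongly_connected_def by auto
    have A: "hdist H w x z - sum_list (map w q) \<le> hdist H w x y" if q: "dpath H y z q" for q
    proof -
      have "hdist H w x z - sum_list (map w q) \<le> s" if "s \<in> ?S1" for s
      proof -
        obtain p where p: "dpath H x y p" "s = sum_list (map w p)" using \<open>s \<in> ?S1\<close> by auto
        have "hdist H w x z \<le> sum_list (map w (p @ q))"
          using hdist_props(1)[OF assms(1,2,3,5) 4(1) dpath_append[OF p(1) q]] .
        then show ?thesis using p(2) by simp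
      qed
      then have "hdist H w x z - sum_list (map w q) \<le> Inf ?S1" using ne1 by (intro cInf_greatest) auto
      then show ?thesis using 4 by (simp add: hdist_def)
    qed
    have "hdist H w x z - hdist H w x y \<le> s" if "s \<in> ?S2" for s
      using A that by force
    then have "hdist H w x z - hdist H w x y \<le> Inf ?S2" using ne2 by (intro cInf_greatest) auto
    then show ?thesis using 4 by (simp add: hdist_def)
  qed
qed


lemma mu_out_eq:
  assumes "weighted_oriented_hypergraph V H w"
  shows "mu_out H w \<alpha> v z = mu_in H w \<alpha> v z"
proof -
  note F = woh_facts(3)[OF assms]
  have img: "{h'\<in>H. v \<in> fst h' \<and> z \<in> snd h'} = prod.swap ` {g\<in>H. v \<in> snd g \<and> z \<in> fst g}" for z
  proof (rule set_eqI, rule iffI)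
    fix h assume hA: "h \<in> {h'\<in>H. v \<in> fst h' \<and> z \<in> snd h'}"
    then have hh: "h \<in> H" "fst h \<noteq> snd h \<longrightarrow> True" by auto
    obtain a b where ab: "h = (a, b)" by (cases h)
    have "(b, a) \<in> H" using conjunct1[OF conjunct2[OF conjunct2[OF conjunct2[OF conjunct2[OF conjunct2[OF F[OF hh(1)]]]]]]] ab by simp
    then have "prod.swap h \<in> {g\<in>H. v \<in> snd g \<and> z \<in> fst g}" using hA ab by simp
    then have "prod.swap (prod.swap h) \<in> prod.swap ` {g\<in>H. v \<in> snd g \<and> z \<in> fst g}" by (rule imageI)
    then show "h \<in> prod.swap ` {g\<in>H. v \<in> snd g \<and> z \<in> fst g}" by (simp only: swap_swap)
  next
    fix h assume "h \<in> prod.swap ` {g\<in>H. v \<in> snd g \<and> z \<in> fst g}"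
    then show "h \<in> {h'\<in>H. v \<in> fst h' \<and> z \<in> snd h'}" using F by auto
  qed
  have img2: "{h'\<in>H. v \<in> fst h'} = prod.swap ` {g\<in>H. v \<in> snd g}"
  proof (rule set_eqI, rule iffI)
    fix h assume hA: "h \<in> {h'\<in>H. v \<in> fst h'}"
    then have hh: "h \<in> H" "fst h \<noteq> snd h \<longrightarrow> True" by auto
    obtain a b where ab: "h = (a, b)" by (cases h)
    have "(b, a) \<in> H" using conjunct1[OF conjunct2[OF conjunct2[OF conjunct2[OF conjunct2[OF conjunct2[OF F[OF hh(1)]]]]]]] ab by simp
    then have "prod.swap h \<in> {g\<in>H. v \<in> snd g}" using hA ab by simp
    then have "prod.swap (prod.swap h) \<in> prod.swap ` {g\<in>H. v \<in> snd g}" by (rule imageI)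
    then show "h \<in> prod.swap ` {g\<in>H. v \<in> snd g}" by (simp only: swap_swap)
  next
    fix h assume "h \<in> prod.swap ` {g\<in>H. v \<in> snd g}"
    then show "h \<in> {h'\<in>H. v \<in> fst h'}" using F by auto
  qed
  have inj: "inj_on prod.swap A" for A :: "'a hedge set" by (rule inj_swap)
  have T: "(\<Sum>h''\<in>{h''\<in>H. v \<in> fst h''}. w h'') = (\<Sum>h''\<in>{h''\<in>H. v \<in> snd h''}. w h'')"
    unfolding img2 by (subst sum.reindex[OF inj]) (auto intro!: sum.cong simp: woh_swap[OF assms])
  have S: "(\<Sum>h'\<in>{h'\<in>H. v \<in> fst h' \<and> z \<in> snd h'}. (1 / real (card (snd h'))) * (w h' / c))
      = (\<Sum>h'\<in>{h'\<in>H. v \<in> snd h' \<and> z \<in> fst h'}. (1 / real (card (fst h'))) * (w h' / c))" for c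
    unfolding img by (subst sum.reindex[OF inj]) (auto intro!: sum.cong simp: woh_swap[OF assms])
  show ?thesis unfolding mu_out_def mu_in_def T S ..
qed

lemma mu_in_self: "mu_in H w \<alpha> u u = \<alpha>"
  unfolding mu_in_def by (rule if_P[OF refl])

lemma mu_in_nonneg:
  assumes "weighted_oriented_hypergraph V H w" "0 \<le> \<alpha>" "\<alpha> \<le> 1"
  shows "mu_in H w \<alpha> u z \<ge> 0"
  using assms woh_facts(3)[OF assms(1)] unfolding mu_in_def
  by (auto intro!: mult_nonneg_nonneg sum_nonneg divide_nonneg_nonneg simp: less_imp_le)

lemma mu_in_Gamma:
  assumes "mu_in H w \<alpha> u z \<noteq> 0" "z \<noteq> u"
  shows "z \<in> Gamma H u"
  using assms unfolding mu_in_def by (auto split: if_splits)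

lemma Gamma_sub:
  assumes "weighted_oriented_hypergraph V H w"
  shows "Gamma H u \<subseteq> V"
  using woh_facts(3)[OF assms] unfolding Gamma_def by auto

lemma mu_in_outside:
  assumes "weighted_oriented_hypergraph V H w" "u \<in> V" "z \<notin> V"
  shows "mu_in H w \<alpha> u z = 0"
  using assms Gamma_sub[OF assms(1)] mu_in_Gamma[of H w \<alpha> u z] by auto

lemma mu_in_mass:
  assumes "weighted_oriented_hypergraph V H w" "u \<in> V" "\<exists>h\<in>H. u \<in> snd h"
  shows "(\<Sum>x\<in>V. mu_in H w \<alpha> u x) = 1"
proof -
  note F = woh_facts(3)[OF assms(1)]
  have fV: "finite V" and fH: "finite H" using woh_facts[OF assms(1)] by auto
  define Hu where "Hu = {h''\<in>H. u \<in> snd h''}"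
  define T where "T = (\<Sum>h''\<in>Hu. w h'')"
  define c where "c h' = (1 / real (card (fst h'))) * (w h' / T)" for h'
  define S where "S x = {h'\<in>H. u \<in> snd h' \<and> x \<in> fst h'}" for x
  have fHu: "finite Hu" using fH Hu_def by auto
  have Tpos: "T > 0" unfolding T_def using assms(3) fHu F
    by (intro sum_pos2[where i="SOME h. h \<in> H \<and> u \<in> snd h"]) (auto simp: Hu_def less_imp_le intro: someI2_ex)
  have mu_eq: "mu_in H w \<alpha> u x = (1 - \<alpha>) * (\<Sum>h'\<in>S x. c h')" if "x \<noteq> u" for x
  proof (cases "x \<in> Gamma H u")
    case True then show ?thesis using that unfolding mu_in_def S_def c_def T_def Hu_def by simp
  next
    case False
    have "S x = {}"
    proof (rule ccontr)
      assume "S x \<noteq> {}"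
      then obtain h where "h \<in> H" "u \<in> snd h" "x \<in> fst h" unfolding S_def by auto
      then have "x \<in> Gamma H u" using F unfolding Gamma_def by (intro CollectI bexI[of _ "(snd h, fst h)"]) auto
      then show False using False by simp
    qed
    then show ?thesis using False that unfolding mu_in_def by simp
  qed
  have Su: "S u = {}"
  proof -
    have False if "h \<in> H" "u \<in> snd h" "u \<in> fst h" for h
    proof -
      have "fst h \<inter> snd h = {}" using F[OF that(1)] by simp
      then show False using that by blast
    qed
    then show ?thesis unfolding S_def by blast
  qed
  have "(\<Sum>x\<in>V. mu_in H w \<alpha> u x) = mu_in H w \<alpha> u u + (\<Sum>x\<in>V-{u}. mu_in H w \<alpha> u x)"
    using fV assms(2) by (simp add: sum.remove)
  also have "(\<Sum>x\<in>V-{u}. mu_in H w \<alpha> u x) = (1 - \<alpha>) * (\<Sum>x\<in>V-{u}. \<Sum>h'\<in>S x. c h')"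
    using mu_eq by (simp add: sum_distrib_left)
  also have "(\<Sum>x\<in>V-{u}. \<Sum>h'\<in>S x. c h') = (\<Sum>x\<in>V. \<Sum>h'\<in>S x. c h')"
    using fV assms(2) Su by (simp add: sum.remove)
  also have "\<dots> = (\<Sum>x\<in>V. \<Sum>h'\<in>Hu. if x \<in> fst h' then c h' else 0)"
  proof (rule sum.cong[OF refl])
    fix x
    have "S x = {h'\<in>Hu. x \<in> fst h'}" by (auto simp: S_def Hu_def)
    then show "(\<Sum>h'\<in>S x. c h') = (\<Sum>h'\<in>Hu. if x \<in> fst h' then c h' else 0)"
      by (simp add: sum.inter_filter[OF fHu])
  qed
  also have "\<dots> = (\<Sum>h'\<in>Hu. \<Sum>x\<in>V. if x \<in> fst h' then c h' else 0)" by (rule sum.swap)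
  also have "\<dots> = (\<Sum>h'\<in>Hu. w h' / T)"
  proof (intro sum.cong refl)
    fix h' assume "h' \<in> Hu"
    then have h': "fst h' \<subseteq> V" "fst h' \<noteq> {}" using F Hu_def by auto
    then have fin: "finite (fst h')" using fV finite_subset by auto
    then have cp: "card (fst h') > 0" using h' by (simp add: card_gt_0_iff)
    have "(\<Sum>x\<in>V. if x \<in> fst h' then c h' else 0) = (\<Sum>x\<in>V \<inter> fst h'. c h')"
      using fV by (simp add: sum.If_cases Int_def)
    also have "V \<inter> fst h' = fst h'" using h' by auto
    finally show "(\<Sum>x\<in>V. if x \<in> fst h' then c h' else 0) = w h' / T"
      using cp unfolding c_def by simp
  qed
  also have "\<dots> = 1" using Tpos unfolding T_def by (simp add: sum_divide_distrib[symmetric])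
  finally have fin: "(\<Sum>x\<in>V. mu_in H w \<alpha> u x) = mu_in H w \<alpha> u u + (1 - \<alpha>) * 1" .
  then show ?thesis using mu_in_self[of H w \<alpha> u] by simp
qed


lemma exists_in_snd:
  assumes "weighted_oriented_hypergraph V H w" "strongly_connected V H" "card V \<ge> 2" "u \<in> V"
  shows "\<exists>h\<in>H. u \<in> snd h"
proof -
  have "V - {u} \<noteq> {}"
  proof
    assume "V - {u} = {}"
    then have "V \<subseteq> {u}" by auto
    then have "card V \<le> card {u}" by (intro card_mono) simp_all
    then show False using assms(3) by simp
  qed
  then obtain x where x: "x \<in> V" "x \<noteq> u" by auto
  have "\<exists>hs. dpath H u x hs" using assms(2) assms(4) x unfolding strongly_connected_def by metis
  then obtain hs where "dpath H u x hs" by blast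
  then have "hd hs \<in> H" "u \<in> fst (hd hs)" unfolding dpath_def by auto
  then show ?thesis using woh_facts(3)[OF assms(1)] by (intro bexI[of _ "(snd (hd hs), fst (hd hs))"]) auto
qed

lemma first_moment:
  assumes "weighted_oriented_hypergraph V H w" "strongly_connected V H" "u \<in> V"
    "0 \<le> \<alpha>" "\<alpha> \<le> 1" "(\<Sum>x\<in>V. mu_in H w \<alpha> u x) = 1"
    and dbound: "\<And>x. x \<in> V \<Longrightarrow> x \<in> Gamma H u \<Longrightarrow> x \<noteq> u \<Longrightarrow> D x \<le> M"
    and D0: "D u = 0"
  shows "(\<Sum>x\<in>V. mu_in H w \<alpha> u x * D x) \<le> (1 - \<alpha>) * M"
proof -
  have fV: "finite V" using woh_facts[OF assms(1)] by auto
  have "(\<Sum>x\<in>V. mu_in H w \<alpha> u x * D x) \<le> (\<Sum>x\<in>V. if x = u then 0 else mu_in H w \<alpha> u x * M)"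
  proof (intro sum_mono)
    fix x assume x: "x \<in> V"
    show "mu_in H w \<alpha> u x * D x \<le> (if x = u then 0 else mu_in H w \<alpha> u x * M)"
    proof (cases "x = u \<or> mu_in H w \<alpha> u x = 0")
      case True then show ?thesis using D0 by auto
    next
      case False
      then have "x \<in> Gamma H u" using mu_in_Gamma by metis
      then show ?thesis using False x dbound mu_in_nonneg[OF assms(1,4,5)] by (auto intro: mult_left_mono)
    qed
  qed
  also have "\<dots> = (\<Sum>x\<in>V - {u}. mu_in H w \<alpha> u x * M)"
    using fV assms(3) by (simp add: sum.remove sum.If_cases Diff_eq Int_def conj_commute)
  also have "\<dots> = M * ((\<Sum>x\<in>V. mu_in H w \<alpha> u x) - mu_in H w \<alpha> u u)"
    using fV assms(3) by (simp add: sum_diff1 sum_distrib_left sum_distrib_right mult.commute right_diff_distrib)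
  also have "\<dots> = (1 - \<alpha>) * M" using assms(6) mu_in_self[of H w \<alpha> u] by simp
  finally show ?thesis .
qed


theorem mainTheorem7:
  fixes V :: "'a set" and H :: "'a hedge set" and w :: "'a hedge \<Rightarrow> real"
    and u v :: 'a and \<alpha> :: real
  assumes "weighted_oriented_hypergraph V H w"
    and "strongly_connected V H"
    and "card V \<ge> 2"
    and "u \<in> V" and "v \<in> V" and "u \<noteq> v"
    and "0 \<le> \<alpha>" and "\<alpha> < 1"
  shows "kappa V H w \<alpha> u v / (1 - \<alpha>) \<le> 2 * Max (w ` H) / hdist H w u v"
proof -
  note wh = assms(1) and sc = assms(2)
  note F = woh_facts(3)[OF wh]
  have fV: "finite V" and fH: "finite H" using woh_facts[OF wh] by auto
  have Hne: "H \<noteq> {}" using H_ne[OF sc assms(4,5,6)] .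
  define d where "d = hdist H w"
  define D where "D = d u v"
  define M where "M = Max (w ` H)"
  define \<mu> where "\<mu> = mu_in H w \<alpha> u"
  define \<nu> where "\<nu> = mu_in H w \<alpha> v"
  have a1: "\<alpha> \<le> 1" using assms(8) by simp
  have nu_eq: "mu_out H w \<alpha> v = \<nu>" unfolding \<nu>_def using mu_out_eq[OF wh] by auto
  have mass\<mu>: "(\<Sum>x\<in>V. \<mu> x) = 1" unfolding \<mu>_def
    using mu_in_mass[OF wh assms(4) exists_in_snd[OF wh sc assms(3,4)]] .
  have mass\<nu>: "(\<Sum>x\<in>V. \<nu> x) = 1" unfolding \<nu>_def
    using mu_in_mass[OF wh assms(5) exists_in_snd[OF wh sc assms(3,5)]] .
  have nn\<mu>: "\<And>x. \<mu> x \<ge> 0" unfolding \<mu>_def using mu_in_nonneg[OF wh assms(7) a1] by auto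
  have nn\<nu>: "\<And>x. \<nu> x \<ge> 0" unfolding \<nu>_def using mu_in_nonneg[OF wh assms(7) a1] by auto
  have out\<mu>: "\<And>x. x \<notin> V \<Longrightarrow> \<mu> x = 0" unfolding \<mu>_def using mu_in_outside[OF wh assms(4)] by auto
  have out\<nu>: "\<And>x. x \<notin> V \<Longrightarrow> \<nu> x = 0" unfolding \<nu>_def using mu_in_outside[OF wh assms(5)] by auto
  have Dpos: "D > 0" unfolding D_def d_def
    using hdist_props(2)[OF wh sc assms(4,5,6)] Min_pos[OF wh Hne] by linarith
  have wM: "\<And>h. h \<in> H \<Longrightarrow> w h \<le> M" unfolding M_def using fH by auto
  have mom1: "(\<Sum>x\<in>V. \<mu> x * d u x) \<le> (1 - \<alpha>) * M" unfolding \<mu>_def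
  proof (rule first_moment[OF wh sc assms(4,7) a1])
    show "sum (mu_in H w \<alpha> u) V = 1" using mass\<mu> \<mu>_def by simp
    show "d u u = 0" unfolding d_def hdist_def by simp
    fix x assume x: "x \<in> V" "x \<in> Gamma H u" "x \<noteq> u"
    then obtain h where h: "h \<in> H" "u \<in> fst h" "x \<in> snd h" unfolding Gamma_def by auto
    have "d u x \<le> sum_list (map w [h])" unfolding d_def
      using hdist_props(1)[OF wh sc assms(4) x(1) x(3)[symmetric] dpath_single[OF h]] by simp
    then show "d u x \<le> M" using wM[OF h(1)] by simp
  qed
  have mom2: "(\<Sum>y\<in>V. \<nu> y * d y v) \<le> (1 - \<alpha>) * M" unfolding \<nu>_def
  proof (rule first_moment[OF wh sc assms(5,7) a1, where D="\<lambda>y. d y v"])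
    show "sum (mu_in H w \<alpha> v) V = 1" using mass\<nu> \<nu>_def by simp
    show "d v v = 0" unfolding d_def hdist_def by simp
    fix x assume x: "x \<in> V" "x \<in> Gamma H v" "x \<noteq> v"
    then obtain h where h: "h \<in> H" "v \<in> fst h" "x \<in> snd h" unfolding Gamma_def by auto
    have h': "(snd h, fst h) \<in> H" "w (snd h, fst h) = w h" using F h(1) by auto
    have "d x v \<le> sum_list (map w [(snd h, fst h)])" unfolding d_def
      using hdist_props(1)[OF wh sc x(1) assms(5) x(3) dpath_single[OF h'(1)]] h by simp
    then show "d x v \<le> M" using wM[OF h(1)] h'(2) by simp
  qed
  define C where "C = couplings V \<mu> \<nu>"
  define cost where "cost \<pi> = (\<Sum>x\<in>V. \<Sum>y\<in>V. \<pi> x y * d x y)" for \<pi> :: "'a \<Rightarrow> 'a \<Rightarrow> real"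
  have Cne: "C \<noteq> {}"
  proof -
    define \<pi> where "\<pi> x y = \<mu> x * \<nu> y" for x y
    have "\<pi> \<in> C" unfolding C_def couplings_def \<pi>_def
      using nn\<mu> nn\<nu> out\<mu> out\<nu> mass\<mu> mass\<nu>
      by (auto simp: sum_distrib_left[symmetric] sum_distrib_right[symmetric])
    then show ?thesis by auto
  qed
  have lb: "cost \<pi> \<ge> D - 2 * (1 - \<alpha>) * M" if "\<pi> \<in> C" for \<pi>
  proof -
    have \<pi>: "\<And>x y. \<pi> x y \<ge> 0" "\<And>x. x \<in> V \<Longrightarrow> (\<Sum>y\<in>V. \<pi> x y) = \<mu> x"
      "\<And>y. y \<in> V \<Longrightarrow> (\<Sum>x\<in>V. \<pi> x y) = \<nu> y"
      using that unfolding C_def couplings_def by auto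
    have tri: "D - d u x - d y v \<le> d x y" if "x \<in> V" "y \<in> V" for x y
      using hdist_tri[OF wh sc assms(4) that(1) assms(5)] hdist_tri[OF wh sc that assms(5)]
      unfolding D_def d_def by linarith
    have "(\<Sum>x\<in>V. \<Sum>y\<in>V. \<pi> x y * (D - d u x - d y v)) \<le> cost \<pi>"
      unfolding cost_def using tri \<pi>(1) by (intro sum_mono mult_left_mono) auto
    moreover have "(\<Sum>x\<in>V. \<Sum>y\<in>V. \<pi> x y * (D - d u x - d y v))
        = D * (\<Sum>x\<in>V. \<Sum>y\<in>V. \<pi> x y) - (\<Sum>x\<in>V. (\<Sum>y\<in>V. \<pi> x y) * d u x)
          - (\<Sum>y\<in>V. (\<Sum>x\<in>V. \<pi> x y) * d y v)"
    proof -
      have e: "\<pi> x y * (D - d u x - d y v) = D * \<pi> x y - \<pi> x y * d u x - \<pi> x y * d y v" for x y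
        by (simp add: right_diff_distrib mult.commute)
      have s1: "(\<Sum>y\<in>V. \<pi> x y * (D - d u x - d y v)) = D * (\<Sum>y\<in>V. \<pi> x y) - (\<Sum>y\<in>V. \<pi> x y) * d u x
          - (\<Sum>y\<in>V. \<pi> x y * d y v)" for x
        unfolding e sum_subtractf sum_distrib_left sum_distrib_right ..
      have s2: "(\<Sum>x\<in>V. \<Sum>y\<in>V. \<pi> x y * d y v) = (\<Sum>y\<in>V. (\<Sum>x\<in>V. \<pi> x y) * d y v)"
        unfolding sum_distrib_right by (rule sum.swap)
      show ?thesis unfolding s1 sum_subtractf s2 sum_distrib_left[symmetric] ..
    qed
    moreover have "(\<Sum>x\<in>V. \<Sum>y\<in>V. \<pi> x y) = 1" using \<pi>(2) mass\<mu> by simp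
    moreover have "(\<Sum>x\<in>V. (\<Sum>y\<in>V. \<pi> x y) * d u x) = (\<Sum>x\<in>V. \<mu> x * d u x)" using \<pi>(2) by simp
    moreover have "(\<Sum>y\<in>V. (\<Sum>x\<in>V. \<pi> x y) * d y v) = (\<Sum>y\<in>V. \<nu> y * d y v)" using \<pi>(3) by simp
    ultimately have "D - (\<Sum>x\<in>V. \<mu> x * d u x) - (\<Sum>y\<in>V. \<nu> y * d y v) \<le> cost \<pi>" by simp
    moreover have "2 * (1 - \<alpha>) * M = (1 - \<alpha>) * M + (1 - \<alpha>) * M" by simp
    ultimately show ?thesis using mom1 mom2 by linarith
  qed
  have W: "wasserstein V d \<mu> \<nu> \<ge> D - 2 * (1 - \<alpha>) * M"
    unfolding wasserstein_def using Cne lb unfolding C_def cost_def by (intro cInf_greatest) auto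
  have k: "kappa V H w \<alpha> u v = 1 - wasserstein V d \<mu> \<nu> / D"
    unfolding kappa_def nu_eq D_def d_def \<mu>_def by simp
  have "1 - wasserstein V d \<mu> \<nu> / D \<le> 2 * (1 - \<alpha>) * M / D"
  proof -
    have "1 - wasserstein V d \<mu> \<nu> / D = (D - wasserstein V d \<mu> \<nu>) / D" using Dpos by (simp add: field_simps)
    also have "\<dots> \<le> 2 * (1 - \<alpha>) * M / D" using W Dpos by (intro divide_right_mono) auto
    finally show ?thesis .
  qed
  then have k2: "kappa V H w \<alpha> u v \<le> 2 * (1 - \<alpha>) * M / D" unfolding k .
  have ne: "1 - \<alpha> > 0" using assms(8) by simp
  have "kappa V H w \<alpha> u v / (1 - \<alpha>) \<le> 2 * (1 - \<alpha>) * M / D / (1 - \<alpha>)"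
    using k2 ne by (rule divide_right_mono[OF _ less_imp_le])
  also have "\<dots> = 2 * M / D" using ne by (simp add: divide_simps)
  finally have fin: "kappa V H w \<alpha> u v / (1 - \<alpha>) \<le> 2 * M / D" .
  show ?thesis using fin unfolding M_def D_def d_def .
qed

end
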